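(* Let $\bar d\ge1$, fix an index $*\in\{1,\dots,\bar d\}$, and for $\mathbf{c},\mathbf{r}\in[0,1]^{\bar d}$ define $h^C_{\mathbf{c},\mathbf{r}},h^S_{\mathbf{c},\mathbf{r}}:[0,1]^{\bar d}\to[0,1]$ by $h^C_{\mathbf{c},\mathbf{r}}(\mathbf{p})=1$ and $h^S_{\mathbf{c},\mathbf{r}}(\mathbf{p})=p_*$ if $c_i\le p_i<c_i+r_i$ for all $i$, and $h^C_{\mathbf{c},\mathbf{r}}(\mathbf{p})=h^S_{\mathbf{c},\mathbf{r}}(\mathbf{p})=0$ otherwise. Let $\mathcal{H}^C=\{h^C_{\mathbf{c},\mathbf{r}}\}$ and $\mathcal{H}^S=\{h^S_{\mathbf{c},\mathbf{r}}\}$ over all $\mathbf{c},\mathbf{r}$. Then $\operatorname{vc}(\mathcal{H}^S)\le 2\bar d$ and $\operatorname{vc}(\mathcal{H}^C)\le 2\bar d$.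
   Context: A countable set $I\subseteq[0,1]^{\bar d}$ is pseudo-shattered by a function class $\mathcal{H}$ if there is a function $g:I\to\mathbb{R}$ such that for every $J\subseteq I$ there is $h_J\in\mathcal{H}$ with $h_J(\mathbf{x})\le g(\mathbf{x})$ for $\mathbf{x}\in J$ and $h_J(\mathbf{x})>g(\mathbf{x})$ for $\mathbf{x}\in I\setminus J$. The pseudo-dimension $\operatorname{vc}(\mathcal{H})$ is the supremum of $|I|$ over sets $I$ pseudo-shattered by $\mathcal{H}$. *)

theory Defs
  imports "HOL-Analysis.Analysis" "HOL-Library.Extended_Nat"
begin

text \<open>Points of [0,1]^d are vectors of type real^'n with d = CARD('n).\<close>

definition unit_cube :: "(real ^ 'n::finite) set" where
  "unit_cube = {p. \<forall>i. 0 \<le> p $ i \<and> p $ i \<le> 1}"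

definition in_box :: "real ^ 'n::finite \<Rightarrow> real ^ 'n \<Rightarrow> real ^ 'n \<Rightarrow> bool" where
  "in_box c r p = (\<forall>i. c $ i \<le> p $ i \<and> p $ i < c $ i + r $ i)"

definition hC :: "real ^ 'n::finite \<Rightarrow> real ^ 'n \<Rightarrow> real ^ 'n \<Rightarrow> real" where
  "hC c r p = (if in_box c r p then 1 else 0)"

definition hS :: "'n::finite \<Rightarrow> real ^ 'n \<Rightarrow> real ^ 'n \<Rightarrow> real ^ 'n \<Rightarrow> real" where
  "hS s c r p = (if in_box c r p then p $ s else 0)"

definition HC :: "(real ^ 'n::finite \<Rightarrow> real) set" where
  "HC = {hC c r | c r. c \<in> unit_cube \<and> r \<in> unit_cube}"

definition HS :: "'n::finite \<Rightarrow> (real ^ 'n \<Rightarrow> real) set" where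
  "HS s = {hS s c r | c r. c \<in> unit_cube \<and> r \<in> unit_cube}"

definition pseudo_shattered :: "('a \<Rightarrow> real) set \<Rightarrow> 'a set \<Rightarrow> bool" where
  "pseudo_shattered H I \<longleftrightarrow> (\<exists>g :: 'a \<Rightarrow> real. \<forall>J \<subseteq> I. \<exists>h \<in> H.
      (\<forall>x \<in> J. h x \<le> g x) \<and> (\<forall>x \<in> I - J. h x > g x))"

definition pseudo_dim :: "'a set \<Rightarrow> ('a \<Rightarrow> real) set \<Rightarrow> enat" where
  "pseudo_dim X H = Sup {(if finite I then enat (card I) else \<infinity>) | I.
      countable I \<and> I \<subseteq> X \<and> pseudo_shattered H I}"

end

theory Submission
  imports Defs
begin

lemma box_key:
  fixes F :: "(real ^ 'n::finite) set"
  assumes fin: "finite F" and big: "card F > 2 * CARD('n)"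
  shows "\<exists>x\<in>F. \<forall>c r. (\<forall>y\<in>F-{x}. in_box c r y) \<longrightarrow> in_box c r x"
proof -
  have ne: "F \<noteq> {}" using big by auto
  have "\<forall>i. \<exists>m\<in>F. \<forall>y\<in>F. m $ i \<le> y $ i"
  proof
    fix i
    have "Min ((\<lambda>y. y $ i) ` F) \<in> (\<lambda>y. y $ i) ` F" using fin ne by (intro Min_in) auto
    then obtain m where m: "m \<in> F" "m $ i = Min ((\<lambda>y. y $ i) ` F)" by auto
    have "\<forall>y\<in>F. m $ i \<le> y $ i" using fin m(2) by auto
    then show "\<exists>m\<in>F. \<forall>y\<in>F. m $ i \<le> y $ i" using m(1) by blast
  qed
  then obtain mn where mn: "\<And>i. mn i \<in> F" "\<And>i y. y \<in> F \<Longrightarrow> mn i $ i \<le> y $ i" by metis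
  have "\<forall>i. \<exists>m\<in>F. \<forall>y\<in>F. y $ i \<le> m $ i"
  proof
    fix i
    have "Max ((\<lambda>y. y $ i) ` F) \<in> (\<lambda>y. y $ i) ` F" using fin ne by (intro Max_in) auto
    then obtain m where m: "m \<in> F" "m $ i = Max ((\<lambda>y. y $ i) ` F)" by auto
    have "\<forall>y\<in>F. y $ i \<le> m $ i" using fin m(2) by auto
    then show "\<exists>m\<in>F. \<forall>y\<in>F. y $ i \<le> m $ i" using m(1) by blast
  qed
  then obtain mx where mx: "\<And>i. mx i \<in> F" "\<And>i y. y \<in> F \<Longrightarrow> y $ i \<le> mx i $ i" by metis
  have "card (range mn \<union> range mx) \<le> card (range mn) + card (range mx)"
    by (rule card_Un_le)
  also have "\<dots> \<le> CARD('n) + CARD('n)"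
    by (intro add_mono card_image_le) auto
  finally have "card (range mn \<union> range mx) < card F" using big by simp
  then have "\<not> F \<subseteq> range mn \<union> range mx"
    using card_mono[of "range mn \<union> range mx" F] by auto
  then obtain x where x: "x \<in> F" "x \<notin> range mn" "x \<notin> range mx" by blast
  show ?thesis
  proof (intro bexI[OF _ x(1)] allI impI)
    fix c r assume h: "\<forall>y\<in>F-{x}. in_box c r y"
    show "in_box c r x" unfolding in_box_def
    proof
      fix i
      have "in_box c r (mn i)" "in_box c r (mx i)" using h mn(1) mx(1) x by auto
      then show "c $ i \<le> x $ i \<and> x $ i < c $ i + r $ i"
        unfolding in_box_def using mn(2)[OF x(1), of i] mx(2)[OF x(1), of i]
        by (meson order_trans le_less_trans)
    qed
  qed
qed

lemma shatter_bound:
  fixes H :: "(real ^ 'n::finite \<Rightarrow> real) set" and X I F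
  assumes H: "\<And>h. h \<in> H \<Longrightarrow> \<exists>c r. \<forall>y\<in>X. h y = (if in_box c r y then v y else 0)"
    and v: "\<And>y. y \<in> X \<Longrightarrow> v y \<ge> 0"
    and IX: "I \<subseteq> X" and sh: "pseudo_shattered H I"
    and F: "finite F" "F \<subseteq> I"
  shows "card F \<le> 2 * CARD('n)"
proof (rule ccontr)
  assume "\<not> ?thesis"
  then obtain x where x: "x \<in> F" and xk: "\<And>c r. (\<forall>y\<in>F-{x}. in_box c r y) \<Longrightarrow> in_box c r x"
    using box_key[OF F(1)] by (metis not_le)
  obtain g where g: "\<And>J. J \<subseteq> I \<Longrightarrow> \<exists>h \<in> H. (\<forall>x \<in> J. h x \<le> g x) \<and> (\<forall>x \<in> I - J. h x > g x)"
    using sh unfolding pseudo_shattered_def by blast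
  obtain h1 where h1: "h1 \<in> H" "\<forall>y\<in>I. h1 y \<le> g y" using g[of I] by auto
  obtain c1 r1 where c1: "\<forall>y\<in>X. h1 y = (if in_box c1 r1 y then v y else 0)" using H[OF h1(1)] by blast
  have g0: "g y \<ge> 0" if "y \<in> I" for y
  proof -
    have "h1 y \<ge> 0" using c1 v IX that by auto
    then show ?thesis using h1(2) that by force
  qed
  have xI: "x \<in> I" "x \<in> X" using x F IX by auto
  obtain h0 where h0: "h0 \<in> H" "\<forall>y\<in>I. h0 y > g y" using g[of "{}"] by auto
  obtain c0 r0 where c0: "\<forall>y\<in>X. h0 y = (if in_box c0 r0 y then v y else 0)" using H[OF h0(1)] by blast
  have vx: "v x > g x"
  proof (cases "in_box c0 r0 x")
    case True then show ?thesis using h0(2) xI c0 by auto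
  next
    case False then show ?thesis using h0(2) xI c0 g0[OF xI(1)] by fastforce
  qed
  obtain h where h: "h \<in> H" "h x \<le> g x" "\<forall>y\<in>I-{x}. h y > g y" using g[of "{x}"] xI by auto
  obtain c r where c: "\<forall>y\<in>X. h y = (if in_box c r y then v y else 0)" using H[OF h(1)] by blast
  have "\<forall>y\<in>F-{x}. in_box c r y"
  proof
    fix y assume y: "y \<in> F - {x}"
    then have "y \<in> I" "y \<in> X" using F IX by auto
    then have "h y > 0" using h(3) g0 y by force
    then show "in_box c r y" using c \<open>y \<in> X\<close> by (auto split: if_splits)
  qed
  then have "in_box c r x" by (rule xk)
  then have "h x = v x" using c xI by auto
  then show False using h(2) vx by simp
qed

lemma dim_bound:
  fixes H :: "(real ^ 'n::finite \<Rightarrow> real) set" and X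
  assumes H: "\<And>h. h \<in> H \<Longrightarrow> \<exists>c r. \<forall>y\<in>X. h y = (if in_box c r y then v y else 0)"
    and v: "\<And>y. y \<in> X \<Longrightarrow> v y \<ge> 0"
  shows "pseudo_dim X H \<le> enat (2 * CARD('n))"
  unfolding pseudo_dim_def
proof (rule Sup_least, clarify)
  fix I assume IX: "I \<subseteq> X" and sh: "pseudo_shattered H I"
  show "(if finite I then enat (card I) else \<infinity>) \<le> enat (2 * CARD('n))"
  proof (cases "finite I")
    case True
    then show ?thesis using shatter_bound[OF H v IX sh True] by auto
  next
    case False
    then obtain F where "F \<subseteq> I" "finite F" "card F = Suc (2 * CARD('n))"
      using infinite_arbitrarily_large by blast
    then show ?thesis using shatter_bound[OF H v IX sh, of F] by auto
  qed
qed

theorem lemmaA12: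
  fixes s :: "'n::finite"
  shows "pseudo_dim unit_cube (HS s) \<le> enat (2 * CARD('n))
       \<and> pseudo_dim (unit_cube :: (real ^ 'n) set) HC \<le> enat (2 * CARD('n))"
proof
  show "pseudo_dim unit_cube (HS s) \<le> enat (2 * CARD('n))"
    by (rule dim_bound[where v="\<lambda>y. y $ s"]) (fastforce simp: HS_def hS_def unit_cube_def)+
  show "pseudo_dim (unit_cube :: (real ^ 'n) set) HC \<le> enat (2 * CARD('n))"
    apply (rule dim_bound[where v="\<lambda>y. 1"])
     apply (unfold HC_def, clarify)
     apply (rule_tac x=c in exI, rule_tac x=r in exI, simp add: hC_def)
    by simp
qed

end
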